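(* Let $\gamma_*>0$ and let $\Phi$ denote the standard normal CDF. Define \[ t_+=\tfrac32\gamma_*+\tfrac{1}{\gamma_*}\log\left(1-\sqrt{1-e^{-\gamma_*}}\right),\qquad t_-=\tfrac32\gamma_*+\tfrac{1}{\gamma_*}\log\left(1+\sqrt{1-e^{-\gamma_*}}\right), \] and for $x\neq 0$ \[ \tilde h(x)=\frac{\Phi(t_--x)-\Phi(t_-)}{\Phi(t_+-x)-\Phi(t_+)}. \] Let $k=e^{-\frac12(t_--2\gamma_* )^2+\frac12(t_+-2\gamma_* )^2}$ and $c=\frac{k}{1+k}$. Then $\tilde h(x)\le\frac{c}{1-c}$ for all $x<0$. *)

theory Defs
  imports "HOL-Probability.Probability"
begin

definition Phi :: "real \<Rightarrow> real" where
  "Phi t = cdf (density lborel std_normal_density) t"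

end

theory Submission
  imports Defs
begin

lemma Phi_diff:
  fixes a b :: real assumes ab: "a \<le> b"
  shows "Phi b - Phi a = integral {a..b} std_normal_density"
proof -
  define M where "M = density lborel (\<lambda>x. ennreal (std_normal_density x))"
  interpret P: prob_space M unfolding M_def by (rule prob_space_normal_density) simp
  define I where "I = integral {a..b} std_normal_density"
  have cont: "continuous_on {a..b} std_normal_density"
    unfolding std_normal_density_def by (intro continuous_intros) auto
  have h1: "(std_normal_density has_integral I) {a..b}"
    unfolding I_def using integrable_continuous_interval[OF cont] by (rule integrable_integral)
  have h2: "(std_normal_density has_integral I) {a<..b}"
  proof (subst has_integral_spike_set_eq[where T="{a..b}"])
    show "negligible {x \<in> {a<..b} - {a..b}. std_normal_density x \<noteq> 0}" by (rule negligible_subset[of "{}"]) auto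
    show "negligible {x \<in> {a..b} - {a<..b}. std_normal_density x \<noteq> 0}"
      by (rule negligible_subset[of "{a}"]) auto
  qed (rule h1)
  have h3: "((\<lambda>x. indicator {a<..b} x * std_normal_density x) has_integral I) UNIV"
  proof -
    have eq: "(\<lambda>x. indicator {a<..b} x * std_normal_density x) = (\<lambda>x. if x \<in> {a<..b} then std_normal_density x else 0)"
      by (auto simp: indicator_def fun_eq_iff)
    show ?thesis unfolding eq has_integral_restrict_UNIV by (rule h2)
  qed
  have Inn: "0 \<le> I" unfolding I_def
    by (rule integral_nonneg) (auto intro: integrable_continuous_interval[OF cont] normal_density_nonneg)
  have "emeasure M {a<..b} = (\<integral>\<^sup>+x. ennreal (std_normal_density x) * indicator {a<..b} x \<partial>lborel)"
    unfolding M_def by (rule emeasure_density) auto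
  also have "\<dots> = (\<integral>\<^sup>+x. ennreal (indicator {a<..b} x * std_normal_density x) \<partial>lborel)"
    by (rule nn_integral_cong) (auto split: split_indicator)
  also have "\<dots> = ennreal I"
    by (rule nn_integral_has_integral_lborel[OF _ _ h3]) (auto simp: normal_density_nonneg)
  finally have m: "measure M {a<..b} = I"
    using Inn by (simp add: P.emeasure_eq_measure)
  have un: "{..b} = {..a} \<union> {a<..b}" using ab by auto
  have "measure M {..b} = measure M {..a} + measure M {a<..b}"
    unfolding un by (rule P.finite_measure_Union) (auto simp: M_def)
  then show ?thesis using m unfolding Phi_def cdf_def M_def I_def by simp
qed
theorem lemma8:
  fixes g :: real and x :: real
  assumes "g > 0" and "x < 0"
  defines "tp \<equiv> 3/2 * g + (1/g) * ln (1 - sqrt (1 - exp (- g)))"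
      and "tm \<equiv> 3/2 * g + (1/g) * ln (1 + sqrt (1 - exp (- g)))"
  defines "k \<equiv> exp (- (1/2) * (tm - 2*g)^2 + (1/2) * (tp - 2*g)^2)"
  defines "c \<equiv> k / (1 + k)"
  shows "(Phi (tm - x) - Phi tm) / (Phi (tp - x) - Phi tp) \<le> c / (1 - c)"
proof -
  define s where "s = sqrt (1 - exp (- g))"
  have e1: "exp (- g) < 1" "0 < exp (-g)" using assms(1) by auto
  have s0: "0 < s" "s < 1" unfolding s_def using e1 by (auto simp: real_sqrt_lt_1_iff)
  have "ln (1 - s) < ln (1 + s)" using s0 by simp
  then have "(1/g) * ln (1 - s) < (1/g) * ln (1 + s)" using assms(1) by (simp add: divide_strict_right_mono)
  then have tptm: "tp < tm" unfolding tp_def tm_def s_def by simp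
  define d where "d = tm - tp"
  have d0: "d > 0" using tptm d_def by simp
  define y where "y = - x"
  have y0: "y > 0" using assms(2) y_def by simp
  define K0 where "K0 = exp (- (tm^2 - tp^2) / 2)"
  define C where "C = 1 / sqrt (2 * pi)"
  have C0: "C > 0" unfolding C_def by simp
  have cont: "continuous_on {a..b} std_normal_density" for a b
    unfolding std_normal_density_def by (intro continuous_intros) auto
  have cont2: "continuous_on {a..b} (\<lambda>u. std_normal_density (u + d))" for a b
    unfolding std_normal_density_def by (intro continuous_intros) auto
  have num: "Phi (tm - x) - Phi tm = integral {tp..tp+y} (\<lambda>u. std_normal_density (u + d))"
  proof -
    have "Phi (tm - x) - Phi tm = integral {tm..tm+y} std_normal_density"
      using Phi_diff[of tm "tm + y"] y0 y_def by simp
    also have "\<dots> = integral {tm-d..tm+y-d} (\<lambda>u. std_normal_density (u + d))"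
      by (rule integral_shift_real_ivl[symmetric])
    moreover have "tm - d = tp" "tm + y - d = tp + y" unfolding d_def by auto
    ultimately show ?thesis by simp
  qed
  have den: "Phi (tp - x) - Phi tp = integral {tp..tp+y} std_normal_density"
    using Phi_diff[of tp "tp + y"] y0 y_def by simp
  have pw: "std_normal_density (u + d) \<le> K0 * std_normal_density u" if "u \<in> {tp..tp+y}" for u
  proof -
    have u: "tp \<le> u" using that by simp
    have "2 * tp * d \<le> 2 * u * d" using u d0 by (intro mult_right_mono) auto
    then have "(tm^2 - tp^2) / 2 + u^2 / 2 \<le> (u + d)^2 / 2"
    proof -
      have "(u + d)^2 / 2 - ((tm^2 - tp^2) / 2 + u^2 / 2) = (2 * u * d - 2 * tp * d) / 2"
        unfolding d_def by (simp add: power2_eq_square field_simps)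
      moreover have "0 \<le> (2 * u * d - 2 * tp * d) / 2" using \<open>2 * tp * d \<le> 2 * u * d\<close> by simp
      ultimately show ?thesis by linarith
    qed
    then have "exp (- ((u + d)^2 / 2)) \<le> exp (- ((tm^2 - tp^2) / 2) + (- (u^2 / 2)))" by (subst exp_le_cancel_iff) linarith
    moreover have e: "K0 * exp ((- (u^2)) / 2) = exp (- ((tm^2 - tp^2) / 2) + (- (u^2 / 2)))"
      unfolding K0_def mult_exp_exp by (rule arg_cong[where f=exp]) (simp add: field_simps)
    ultimately have "exp ((-((u + d)^2)) / 2) \<le> K0 * exp ((- (u^2)) / 2)" unfolding e by simp
    then have "C * exp ((-((u + d)^2)) / 2) \<le> C * (K0 * exp ((- (u^2)) / 2))" using C0 by simp
    then show ?thesis unfolding std_normal_density_def C_def by (simp add: algebra_simps)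
  qed
  have numle: "Phi (tm - x) - Phi tm \<le> K0 * (Phi (tp - x) - Phi tp)"
    unfolding num den integral_mult_right[symmetric]
    by (rule integral_le) (auto intro!: integrable_continuous_interval cont cont2 continuous_on_mult_left pw)
  define m where "m = C * exp (- (tp^2 + (tp+y)^2) / 2)"
  have m0: "m > 0" unfolding m_def using C0 by simp
  have mle: "m \<le> std_normal_density u" if "u \<in> {tp..tp+y}" for u
  proof -
    have "u^2 \<le> tp^2 + (tp+y)^2"
    proof (cases "u \<ge> 0")
      case True
      then have "u^2 \<le> (tp+y)^2" using that by (intro power_mono) auto
      then show ?thesis by (smt (verit) zero_le_power2)
    next
      case False
      then have "(-u)^2 \<le> (-tp)^2" using that by (intro power_mono) auto
      then show ?thesis by (smt (verit) power2_minus zero_le_power2)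
    qed
    then have "exp (- (tp^2 + (tp+y)^2) / 2) \<le> exp ((-(u^2)) / 2)" by simp
    then have "m \<le> C * exp ((-(u^2)) / 2)" unfolding m_def using C0 by (intro mult_left_mono) auto
    moreover have "std_normal_density u = C * exp ((-(u^2)) / 2)" by (simp add: std_normal_density_def C_def)
    ultimately show ?thesis by simp
  qed
  have "integral {tp..tp+y} (\<lambda>_. m) \<le> integral {tp..tp+y} std_normal_density"
    by (rule integral_le) (auto intro!: integrable_continuous_interval cont mle)
  moreover have "integral {tp..tp+y} (\<lambda>_. m) = y * m" using y0 by simp
  ultimately have dpos: "Phi (tp - x) - Phi tp > 0" unfolding den using y0 m0
    by (smt (verit) mult_pos_pos)
  have ratio: "(Phi (tm - x) - Phi tm) / (Phi (tp - x) - Phi tp) \<le> K0"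
    using numle dpos by (simp add: divide_le_eq)
  have "- (tm^2 - tp^2) / 2 \<le> - (1/2) * (tm - 2*g)^2 + (1/2) * (tp - 2*g)^2"
  proof -
    have "0 \<le> 2 * g * (tm - tp)" using assms(1) tptm by simp
    moreover have "(- (1/2) * (tm - 2*g)^2 + (1/2) * (tp - 2*g)^2) - (- (tm^2 - tp^2) / 2) = 2 * g * (tm - tp)"
      by (simp add: power2_eq_square field_simps)
    ultimately show ?thesis by linarith
  qed
  then have K0k: "K0 \<le> k" unfolding K0_def k_def by simp
  have k0: "k > 0" unfolding k_def by simp
  have "c / (1 - c) = k" unfolding c_def using k0
    by (simp add: field_simps)
  then show ?thesis using ratio K0k by simp
qed
end
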